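(* In the standing setup, assume the element $j\in G$ with $\rho(j)=\mathrm{diag}(e^{2\pi iq_1},\dots,e^{2\pi iq_n})$ exists, and fix $\sigma\in\mathrm{Hom}(G,\mathbb{Z}/2\mathbb{Z})$. If $\sigma(h)(\sigma(j)+1)\equiv 0 \pmod 2$ for all $h\in G$ (which holds for instance if $\sigma(j)=1$ or $\sigma\equiv 0$), then for every $h\in G$ and every homogeneous $a\in M_{f_h}$, $$\varphi(h^{-1}j)(a1_h)=e^{2\pi i(\deg a+s_h)}\,a1_h,$$ i.e. $\varphi(h^{-1}j)|_{A_h}=\exp(2\pi i\mathcal{Q})|_{A_h}$ where $\mathcal{Q}(a1_h)=(\deg a+s_h)a1_h$; thus $GM_f$ is $G$-Euler.
   Context: Standing setup. Let $f\in\mathbb{C}[z_1,\dots,z_n]$ be quasi-homogeneous with an isolated singularity at $0$, with weights $q_i\in(0,1)$ (so $f(e^{tq_1}z_1,\dots,e^{tq_n}z_n)=e^tf(z)$); $M_f=\mathbb{C}[z]/(\partial_1f,\dots,\partial_nf)$ graded by $\deg z_i=q_i$. $G$ is a finite abelian group with a diagonal representation $\rho:G\to GL(n,\mathbb{C})$ leaving $f$ invariant; $\rho(g)=\mathrm{diag}(e^{2\pi i\nu_i(g)})$ with $\nu_i(g)\in[0,1)$; $\mathrm{Fix}(g)$ is the span of the $z_i$ with $\nu_i(g)=0$, $f_g=f|_{\mathrm{Fix}(g)}$, $A_g=M_{f_g}$ (equal to $\mathbb{C}$ if $\mathrm{Fix}(g)=0$) with elements $a1_g$, and $GM_f=\bigoplus_gA_g$.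 Shift $s_g=\sum_{i:\nu_i(g)\ne0}(\nu_i(g)-q_i)$. Given $\sigma\in\mathrm{Hom}(G,\mathbb{Z}/2\mathbb{Z})$, the $G$-action on $GM_f$ is $$\varphi(h)(a1_g)=(-1)^{\sigma(h)\sigma(g)}\det(\rho(h))^{-1}\det(\rho(h)|_{\mathrm{Fix}(g)})\,(a\circ\rho(h))\,1_g,$$ where $(a\circ\rho(h))(z)=a(\rho(h)z)$ and the determinant of the restriction to the zero space is $1$. $GM_f$ is called $G$-Euler if there is a central $j$ with $\varphi(h^{-1}j)|_{A_h}=\exp(2\pi i\mathcal{Q})|_{A_h}$ for all $h$. *)

theory Defs
  imports "HOL-Analysis.Analysis" "HOL-Algebra.Elementary_Groups"
begin

text \<open>Points of C^n are functions 'n => complex on a finite index type 'n;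
 polynomials are polynomial functions.  Diagonal representation:
 rho(g) = diag(exp(2 pi i nu_i(g))).\<close>

definition rho :: "('g \<Rightarrow> 'n \<Rightarrow> real) \<Rightarrow> 'g \<Rightarrow> 'n \<Rightarrow> complex" where
  "rho \<nu> g i = cis (2 * pi * \<nu> g i)"

definition act :: "('n \<Rightarrow> complex) \<Rightarrow> ('n \<Rightarrow> complex) \<Rightarrow> ('n \<Rightarrow> complex)" where
  "act D z = (\<lambda>i. D i * z i)"

definition Fix :: "('g \<Rightarrow> 'n \<Rightarrow> real) \<Rightarrow> 'g \<Rightarrow> 'n set" where
  "Fix \<nu> g = {i. \<nu> g i = 0}"

definition monom :: "('n::finite \<Rightarrow> nat) \<Rightarrow> ('n \<Rightarrow> complex) \<Rightarrow> complex" where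
  "monom m z = (\<Prod>i\<in>UNIV. z i ^ m i)"

definition polys :: "'n::finite set \<Rightarrow> (('n \<Rightarrow> complex) \<Rightarrow> complex) set" where
  "polys I = {p. \<exists>M c. finite M \<and> (\<forall>m\<in>M. \<forall>i. i \<notin> I \<longrightarrow> m i = 0)
                      \<and> p = (\<lambda>z. \<Sum>m\<in>M. c m * monom m z)}"

definition restr :: "'n set \<Rightarrow> (('n \<Rightarrow> complex) \<Rightarrow> complex) \<Rightarrow> ('n \<Rightarrow> complex) \<Rightarrow> complex" where
  "restr I F = (\<lambda>z. F (\<lambda>i. if i \<in> I then z i else 0))"

definition pd :: "'n \<Rightarrow> (('n \<Rightarrow> complex) \<Rightarrow> complex) \<Rightarrow> ('n \<Rightarrow> complex) \<Rightarrow> complex" where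
  "pd i F z = deriv (\<lambda>w. F (z(i := w))) (z i)"

definition qhom :: "('n \<Rightarrow> real) \<Rightarrow> real \<Rightarrow> (('n \<Rightarrow> complex) \<Rightarrow> complex) \<Rightarrow> bool" where
  "qhom q d a \<longleftrightarrow> (\<forall>t::real. \<forall>z. a (\<lambda>i. complex_of_real (exp (t * q i)) * z i)
                                 = complex_of_real (exp (t * d)) * a z)"

definition jac_ideal :: "'n::finite set \<Rightarrow> (('n \<Rightarrow> complex) \<Rightarrow> complex) \<Rightarrow> (('n \<Rightarrow> complex) \<Rightarrow> complex) set" where
  "jac_ideal I F = {p. \<exists>b. (\<forall>i\<in>I. b i \<in> polys I) \<and> p = (\<lambda>z. \<Sum>i\<in>I. b i z * pd i F z)}"

definition jclass :: "'n::finite set \<Rightarrow> (('n \<Rightarrow> complex) \<Rightarrow> complex) \<Rightarrow> (('n \<Rightarrow> complex) \<Rightarrow> complex)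
                     \<Rightarrow> (('n \<Rightarrow> complex) \<Rightarrow> complex) set" where
  "jclass I F a = {b \<in> polys I. (\<lambda>z. a z - b z) \<in> jac_ideal I F}"

definition jac_ring :: "'n::finite set \<Rightarrow> (('n \<Rightarrow> complex) \<Rightarrow> complex) \<Rightarrow> (('n \<Rightarrow> complex) \<Rightarrow> complex) set set" where
  "jac_ring I F = jclass I F ` polys I"

definition hom_class :: "('n \<Rightarrow> real) \<Rightarrow> real \<Rightarrow> (('n \<Rightarrow> complex) \<Rightarrow> complex) set \<Rightarrow> bool" where
  "hom_class q d c \<longleftrightarrow> (\<exists>a\<in>c. qhom q d a)"

definition A :: "('g \<Rightarrow> 'n::finite \<Rightarrow> real) \<Rightarrow> (('n \<Rightarrow> complex) \<Rightarrow> complex) \<Rightarrow> 'g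
                 \<Rightarrow> (('n \<Rightarrow> complex) \<Rightarrow> complex) set set" where
  "A \<nu> f g = jac_ring (Fix \<nu> g) (restr (Fix \<nu> g) f)"

definition shift :: "('n::finite \<Rightarrow> real) \<Rightarrow> ('g \<Rightarrow> 'n \<Rightarrow> real) \<Rightarrow> 'g \<Rightarrow> real" where
  "shift q \<nu> g = (\<Sum>i\<in>UNIV - Fix \<nu> g. \<nu> g i - q i)"

text \<open>The action phi(h) on the summand a 1_g (elements of GM_f are pairs (g, class in A_g)).
 det(rho(h)) is the product of its diagonal entries; det of the restriction to Fix(g)
 is the product over Fix(g) (empty product 1).\<close>
definition phi :: "('g \<Rightarrow> 'n::finite \<Rightarrow> real) \<Rightarrow> ('g \<Rightarrow> int) \<Rightarrow> (('n \<Rightarrow> complex) \<Rightarrow> complex)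
                   \<Rightarrow> 'g \<Rightarrow> 'g \<times> (('n \<Rightarrow> complex) \<Rightarrow> complex) set
                   \<Rightarrow> 'g \<times> (('n \<Rightarrow> complex) \<Rightarrow> complex) set" where
  "phi \<nu> \<sigma> f h x = (let g = fst x; c = snd x; a = (SOME a. a \<in> c);
       k = (-1::complex) ^ nat (\<sigma> h * \<sigma> g) * inverse (\<Prod>i\<in>UNIV. rho \<nu> h i)
             * (\<Prod>i\<in>Fix \<nu> g. rho \<nu> h i)
     in (g, jclass (Fix \<nu> g) (restr (Fix \<nu> g) f) (\<lambda>z. k * a (act (rho \<nu> h) z))))"

text \<open>exp(2 pi i Q) on a homogeneous element a 1_h of degree d.\<close>
definition scale_class :: "complex \<Rightarrow> (('n \<Rightarrow> complex) \<Rightarrow> complex) set \<Rightarrow> (('n \<Rightarrow> complex) \<Rightarrow> complex) set" where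
  "scale_class k c = (\<lambda>b z. k * b z) ` c"

definition G_Euler :: "('g, 'b) monoid_scheme \<Rightarrow> ('n::finite \<Rightarrow> real) \<Rightarrow> ('g \<Rightarrow> 'n \<Rightarrow> real)
                        \<Rightarrow> ('g \<Rightarrow> int) \<Rightarrow> (('n \<Rightarrow> complex) \<Rightarrow> complex) \<Rightarrow> bool" where
  "G_Euler G q \<nu> \<sigma> f \<longleftrightarrow> (\<exists>j\<in>carrier G. (\<forall>g\<in>carrier G. g \<otimes>\<^bsub>G\<^esub> j = j \<otimes>\<^bsub>G\<^esub> g) \<and>
     (\<forall>h\<in>carrier G. \<forall>d c. c \<in> A \<nu> f h \<and> hom_class q d c \<longrightarrow>
        phi \<nu> \<sigma> f (inv\<^bsub>G\<^esub> h \<otimes>\<^bsub>G\<^esub> j) (h, c)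
          = (h, scale_class (cis (2 * pi * (d + shift q \<nu> h))) c)))"

end

theory Submission
  imports Defs "HOL-Complex_Analysis.Conformal_Mappings"
begin

lemma polys_dep:
  assumes "p \<in> polys I" "\<forall>i\<in>I. z i = w i"
  shows "p z = p w"
proof -
  obtain M c where M: "finite M" "\<forall>m\<in>M. \<forall>i. i \<notin> I \<longrightarrow> m i = 0"
     "p = (\<lambda>z. \<Sum>m\<in>M. c m * monom m z)" using assms(1) unfolding polys_def by blast
  have "monom m z = monom m w" if "m \<in> M" for m
    unfolding monom_def using M(2) that assms(2) by (intro prod.cong refl) (metis power_0)
  then show ?thesis using M(3) by simp
qed

lemma polys_ext:
  assumes "finite M" "M \<subseteq> N" "finite N"
  shows "(\<Sum>m\<in>M. c m * monom m z) = (\<Sum>m\<in>N. (if m \<in> M then c m else 0) * monom m z)"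
proof -
  have "(\<Sum>m\<in>N. (if m \<in> M then c m else 0) * monom m z) = (\<Sum>m\<in>M. (if m \<in> M then c m else 0) * monom m z)"
    using assms by (intro sum.mono_neutral_right) auto
  then show ?thesis by simp
qed

lemma polys_diff:
  assumes "p \<in> polys I" "r \<in> polys I"
  shows "(\<lambda>z. p z - r z) \<in> polys I"
proof -
  obtain M c where M: "finite M" "\<forall>m\<in>M. \<forall>i. i \<notin> I \<longrightarrow> m i = 0"
     "p = (\<lambda>z. \<Sum>m\<in>M. c m * monom m z)" using assms(1) unfolding polys_def by blast
  obtain N e where N: "finite N" "\<forall>m\<in>N. \<forall>i. i \<notin> I \<longrightarrow> m i = 0"
     "r = (\<lambda>z. \<Sum>m\<in>N. e m * monom m z)" using assms(2) unfolding polys_def by blast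
  define c' where "c' = (\<lambda>m. (if m \<in> M then c m else 0) - (if m \<in> N then e m else 0))"
  have fin: "finite (M \<union> N)" using M(1) N(1) by simp
  have eq: "(\<lambda>z. p z - r z) = (\<lambda>z. \<Sum>m\<in>M \<union> N. c' m * monom m z)"
  proof
    fix z
    have "p z = (\<Sum>m\<in>M \<union> N. (if m \<in> M then c m else 0) * monom m z)"
      unfolding M(3) by (rule polys_ext[OF M(1) Un_upper1 fin])
    moreover have "r z = (\<Sum>m\<in>M \<union> N. (if m \<in> N then e m else 0) * monom m z)"
      unfolding N(3) by (rule polys_ext[OF N(1) Un_upper2 fin])
    ultimately show "p z - r z = (\<Sum>m\<in>M \<union> N. c' m * monom m z)"
      unfolding c'_def by (simp only: sum_subtractf[symmetric] left_diff_distrib)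
  qed
  have MN: "\<forall>m\<in>M \<union> N. \<forall>i. i \<notin> I \<longrightarrow> m i = 0" using M(2) N(2) by blast
  show ?thesis unfolding polys_def eq mem_Collect_eq
    by (rule exI[of _ "M \<union> N"], rule exI[of _ c']) (use fin MN in simp)
qed

lemma polys_scale:
  assumes "p \<in> polys I"
  shows "(\<lambda>z. K * p z) \<in> polys I"
proof -
  obtain M c where M: "finite M" "\<forall>m\<in>M. \<forall>i. i \<notin> I \<longrightarrow> m i = 0"
     "p = (\<lambda>z. \<Sum>m\<in>M. c m * monom m z)" using assms(1) unfolding polys_def by blast
  have eq: "(\<lambda>z. K * p z) = (\<lambda>z. \<Sum>m\<in>M. (K * c m) * monom m z)"
    unfolding M(3) by (simp add: sum_distrib_left mult.assoc)
  show ?thesis unfolding polys_def eq mem_Collect_eq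
    by (rule exI[of _ M], rule exI[of _ "\<lambda>m. K * c m"]) (use M(1,2) in simp)
qed

lemma polys_act:
  assumes "p \<in> polys I"
  shows "(\<lambda>z. p (act D z)) \<in> polys I"
proof -
  obtain M c where M: "finite M" "\<forall>m\<in>M. \<forall>i. i \<notin> I \<longrightarrow> m i = 0"
     "p = (\<lambda>z. \<Sum>m\<in>M. c m * monom m z)" using assms(1) unfolding polys_def by blast
  have mm: "monom m (act D z) = monom m D * monom m z" for m z
    unfolding monom_def act_def by (simp add: power_mult_distrib prod.distrib)
  have eq: "(\<lambda>z. p (act D z)) = (\<lambda>z. \<Sum>m\<in>M. (c m * monom m D) * monom m z)"
    unfolding M(3) by (simp add: mm mult.assoc)
  show ?thesis unfolding polys_def eq mem_Collect_eq
    by (rule exI[of _ M], rule exI[of _ "\<lambda>m. c m * monom m D"]) (use M(1,2) in simp)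
qed

lemma polys_holo:
  assumes "p \<in> polys I" "\<And>k. g k holomorphic_on S"
  shows "(\<lambda>t. p (\<lambda>k. g k t)) holomorphic_on S"
proof -
  obtain M c where M: "finite M" "\<forall>m\<in>M. \<forall>i. i \<notin> I \<longrightarrow> m i = 0"
     "p = (\<lambda>z. \<Sum>m\<in>M. c m * monom m z)" using assms(1) unfolding polys_def by blast
  show ?thesis unfolding M(3) monom_def
    by (intro holomorphic_intros assms(2))
qed

lemma polys_zero: "(\<lambda>z. 0) \<in> polys I"
  unfolding polys_def mem_Collect_eq
  by (rule exI[of _ "{}"], rule exI[of _ "\<lambda>m. 0"]) simp

lemma jac_zero: "(\<lambda>z. 0) \<in> jac_ideal (I::'n::finite set) F"
  unfolding jac_ideal_def mem_Collect_eq
  by (rule exI[of _ "\<lambda>i z. 0"]) (simp add: polys_zero)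

lemma jac_diff:
  assumes "x \<in> jac_ideal (I::'n::finite set) F" "y \<in> jac_ideal I F"
  shows "(\<lambda>z. x z - y z) \<in> jac_ideal I F"
proof -
  obtain b where b: "\<forall>i\<in>I. b i \<in> polys I" "x = (\<lambda>z. \<Sum>i\<in>I. b i z * pd i F z)"
    using assms(1) unfolding jac_ideal_def by blast
  obtain b' where b': "\<forall>i\<in>I. b' i \<in> polys I" "y = (\<lambda>z. \<Sum>i\<in>I. b' i z * pd i F z)"
    using assms(2) unfolding jac_ideal_def by blast
  have eq: "(\<lambda>z. x z - y z) = (\<lambda>z. \<Sum>i\<in>I. (\<lambda>i z. b i z - b' i z) i z * pd i F z)"
    unfolding b(2) b'(2) by (simp add: sum_subtractf left_diff_distrib)
  have BB: "\<forall>i\<in>I. (\<lambda>i z. b i z - b' i z) i \<in> polys I" using b(1) b'(1) polys_diff by blast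
  show ?thesis unfolding jac_ideal_def mem_Collect_eq eq
    by (rule exI, rule conjI[OF BB refl])
qed

lemma jac_scale:
  assumes "x \<in> jac_ideal (I::'n::finite set) F"
  shows "(\<lambda>z. K * x z) \<in> jac_ideal I F"
proof -
  obtain b where b: "\<forall>i\<in>I. b i \<in> polys I" "x = (\<lambda>z. \<Sum>i\<in>I. b i z * pd i F z)"
    using assms(1) unfolding jac_ideal_def by blast
  have eq: "(\<lambda>z. K * x z) = (\<lambda>z. \<Sum>i\<in>I. (\<lambda>i z. K * b i z) i z * pd i F z)"
    unfolding b(2) by (simp add: sum_distrib_left mult.assoc)
  have BB: "\<forall>i\<in>I. (\<lambda>i z. K * b i z) i \<in> polys I" using b(1) polys_scale by blast
  show ?thesis unfolding jac_ideal_def mem_Collect_eq eq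
    by (rule exI, rule conjI[OF BB refl])
qed

lemma pd_act:
  assumes inv: "\<And>z. F (act D z) = F z" and nz: "D i \<noteq> 0"
    and hol: "(\<lambda>u. F (z(i := u))) holomorphic_on UNIV"
  shows "pd i F (act D z) = inverse (D i) * pd i F z"
proof -
  define \<psi> where "\<psi> = (\<lambda>u. F (z(i := u)))"
  have upd: "(act D z)(i := w) = act D (z(i := w / D i))" for w
    using nz unfolding act_def by (auto simp: fun_eq_iff)
  have feq: "(\<lambda>w. F ((act D z)(i := w))) = (\<lambda>w. \<psi> (w / D i))"
    unfolding upd inv \<psi>_def by simp
  have d1: "(\<psi> has_field_derivative deriv \<psi> (z i)) (at (z i))"
    using hol unfolding \<psi>_def
    by (meson DERIV_deriv_iff_field_differentiable UNIV_I holomorphic_on_imp_differentiable_at open_UNIV)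
  have d2: "((\<lambda>w. w / D i) has_field_derivative inverse (D i)) (at (act D z i))"
    by (auto intro!: derivative_eq_intros simp: field_simps nz)
  have "(act D z i) / D i = z i" using nz unfolding act_def by simp
  then have "((\<lambda>w. \<psi> (w / D i)) has_field_derivative deriv \<psi> (z i) * inverse (D i)) (at (act D z i))"
    using DERIV_chain2[of \<psi> "deriv \<psi> (z i)" "\<lambda>w. w / D i" "act D z i" "inverse (D i)"] d1 d2 by simp
  then have "deriv (\<lambda>w. \<psi> (w / D i)) (act D z i) = deriv \<psi> (z i) * inverse (D i)"
    by (rule DERIV_imp_deriv)
  then show ?thesis unfolding pd_def feq \<psi>_def by simp
qed

lemma jac_act:
  assumes x: "x \<in> jac_ideal (I::'n::finite set) F"
    and inv: "\<And>z. F (act D z) = F z" and nz: "\<And>i. D i \<noteq> 0"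
    and hol: "\<And>i z. i \<in> I \<Longrightarrow> (\<lambda>u. F (z(i := u))) holomorphic_on UNIV"
  shows "(\<lambda>z. x (act D z)) \<in> jac_ideal I F"
proof -
  obtain b where b: "\<forall>i\<in>I. b i \<in> polys I" "x = (\<lambda>z. \<Sum>i\<in>I. b i z * pd i F z)"
    using x unfolding jac_ideal_def by blast
  have eq: "(\<lambda>z. x (act D z)) = (\<lambda>z. \<Sum>i\<in>I. (\<lambda>i z. inverse (D i) * b i (act D z)) i z * pd i F z)"
    unfolding b(2) using pd_act[OF inv nz hol] by (auto intro!: sum.cong simp: fun_eq_iff)
  have BB: "\<forall>i\<in>I. (\<lambda>i z. inverse (D i) * b i (act D z)) i \<in> polys I" using b(1) polys_scale polys_act by blast
  show ?thesis unfolding jac_ideal_def mem_Collect_eq eq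
    by (rule exI, rule conjI[OF BB refl])
qed

lemma jclass_cong:
  assumes "(\<lambda>z. x z - y z) \<in> jac_ideal (I::'n::finite set) F"
  shows "jclass I F x = jclass I F y"
proof -
  have "(\<lambda>z. x z - b z) \<in> jac_ideal I F \<longleftrightarrow> (\<lambda>z. y z - b z) \<in> jac_ideal I F" for b
  proof
    assume "(\<lambda>z. x z - b z) \<in> jac_ideal I F"
    from jac_diff[OF this assms] show "(\<lambda>z. y z - b z) \<in> jac_ideal I F" by simp
  next
    assume h: "(\<lambda>z. y z - b z) \<in> jac_ideal I F"
    from jac_diff[OF h jac_diff[OF jac_zero assms]] show "(\<lambda>z. x z - b z) \<in> jac_ideal I F" by simp
  qed
  then show ?thesis unfolding jclass_def by auto
qed

lemma jclass_scale:
  assumes K: "K \<noteq> 0"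
  shows "scale_class K (jclass (I::'n::finite set) F x) = jclass I F (\<lambda>z. K * x z)"
proof
  show "scale_class K (jclass I F x) \<subseteq> jclass I F (\<lambda>z. K * x z)"
  proof
    fix c assume "c \<in> scale_class K (jclass I F x)"
    then obtain b where b: "b \<in> polys I" "(\<lambda>z. x z - b z) \<in> jac_ideal I F" and c: "c = (\<lambda>z. K * b z)"
      unfolding scale_class_def jclass_def by auto
    have "(\<lambda>z. K * x z - c z) \<in> jac_ideal I F"
      using jac_scale[OF b(2), of K] unfolding c by (simp add: right_diff_distrib)
    then show "c \<in> jclass I F (\<lambda>z. K * x z)" unfolding jclass_def c using polys_scale[OF b(1)] by simp
  qed
next
  show "jclass I F (\<lambda>z. K * x z) \<subseteq> scale_class K (jclass I F x)"
  proof
    fix c assume "c \<in> jclass I F (\<lambda>z. K * x z)"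
    then have c: "c \<in> polys I" "(\<lambda>z. K * x z - c z) \<in> jac_ideal I F" unfolding jclass_def by auto
    have "(\<lambda>z. x z - inverse K * c z) \<in> jac_ideal I F"
    proof -
      have "(\<lambda>z. inverse K * (K * x z - c z)) = (\<lambda>z. x z - inverse K * c z)"
        using K by (auto simp: fun_eq_iff field_simps)
      then show ?thesis using jac_scale[OF c(2), of "inverse K"] by simp
    qed
    then have "(\<lambda>z. inverse K * c z) \<in> jclass I F x" unfolding jclass_def using polys_scale[OF c(1)] by simp
    moreover have "c = (\<lambda>z. K * (\<lambda>z. inverse K * c z) z)" using K by (auto simp: fun_eq_iff field_simps)
    ultimately show "c \<in> scale_class K (jclass I F x)" unfolding scale_class_def by (metis image_eqI)
  qed
qed

lemma zero_islimpt_Reals: "(0::complex) islimpt \<real>"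
  unfolding islimpt_approachable
proof (intro allI impI)
  fix e :: real assume e: "0 < e"
  show "\<exists>x'::complex\<in>\<real>. x' \<noteq> 0 \<and> dist x' 0 < e"
  proof (rule bexI[where x="complex_of_real (e / 2)"])
    show "complex_of_real (e / 2) \<in> \<real>" by simp
    have "dist (complex_of_real (e / 2)) 0 = e / 2" using e by (simp add: dist_norm)
    then show "complex_of_real (e / 2) \<noteq> 0 \<and> dist (complex_of_real (e / 2)) 0 < e"
      using e by auto
  qed
qed

lemma qhom_complex:
  assumes a: "a \<in> polys I" and qh: "qhom q d a"
  shows "a (\<lambda>i. cis (2 * pi * q i) * z i) = cis (2 * pi * d) * a z"
proof -
  define H where "H = (\<lambda>t::complex. a (\<lambda>i. exp (t * of_real (q i)) * z i) - exp (t * of_real d) * a z)"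
  have hol: "H holomorphic_on UNIV"
    unfolding H_def by (intro holomorphic_intros polys_holo[OF a])
  have H0: "H u = 0" if "u \<in> \<real>" for u
  proof -
    from that obtain t where t: "u = of_real t" by (rule Reals_cases)
    have e: "exp (u * of_real r) = complex_of_real (exp (t * r))" for r
      unfolding t by (metis exp_of_real of_real_mult)
    have "a (\<lambda>i. complex_of_real (exp (t * q i)) * z i) = complex_of_real (exp (t * d)) * a z"
      using qh[unfolded qhom_def, rule_format, of t z] .
    then show ?thesis unfolding H_def e by simp
  qed
  have "H (\<i> * of_real (2 * pi)) = 0"
    using analytic_continuation[OF hol open_UNIV connected_UNIV subset_UNIV UNIV_I zero_islimpt_Reals H0 UNIV_I] .
  then show ?thesis
    unfolding H_def cis_conv_exp by (simp add: mult_ac)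
qed



theorem mainTheorem2:
  fixes G :: "('g, 'b) monoid_scheme"
    and q :: "'n::finite \<Rightarrow> real"
    and f :: "('n \<Rightarrow> complex) \<Rightarrow> complex"
    and \<nu> :: "'g \<Rightarrow> 'n \<Rightarrow> real"
    and \<sigma> :: "'g \<Rightarrow> int"
    and j :: 'g
  assumes weights: "\<forall>i. 0 < q i \<and> q i < 1"
    and f_poly: "f \<in> polys UNIV"
    and f_qhom: "qhom q 1 f"
    and f_crit: "\<forall>i. pd i f (\<lambda>_. 0) = 0"
    and f_isolated: "\<exists>\<epsilon>>0. \<forall>z. z \<noteq> (\<lambda>_. 0) \<and> (\<forall>i. cmod (z i) < \<epsilon>) \<longrightarrow> (\<exists>i. pd i f z \<noteq> 0)"
    and G_group: "comm_group G" and G_fin: "finite (carrier G)"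
    and nu_range: "\<forall>g\<in>carrier G. \<forall>i. 0 \<le> \<nu> g i \<and> \<nu> g i < 1"
    and rho_hom: "\<forall>g\<in>carrier G. \<forall>h\<in>carrier G. \<forall>i. rho \<nu> (g \<otimes>\<^bsub>G\<^esub> h) i = rho \<nu> g i * rho \<nu> h i"
    and f_inv: "\<forall>g\<in>carrier G. \<forall>z. f (act (rho \<nu> g) z) = f z"
    and j_mem: "j \<in> carrier G"
    and j_rho: "\<forall>i. rho \<nu> j i = cis (2 * pi * q i)"
    and sigma_hom: "\<sigma> \<in> hom G (integer_mod_group 2)"
    and sigma_cond: "\<forall>h\<in>carrier G. (\<sigma> h * (\<sigma> j + 1)) mod 2 = 0"
  shows "(\<forall>h\<in>carrier G. \<forall>d c. c \<in> A \<nu> f h \<and> hom_class q d c \<longrightarrow>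
            phi \<nu> \<sigma> f (inv\<^bsub>G\<^esub> h \<otimes>\<^bsub>G\<^esub> j) (h, c)
              = (h, scale_class (cis (2 * pi * (d + shift q \<nu> h))) c))
         \<and> G_Euler G q \<nu> \<sigma> f"
proof -
  interpret comm_group G by (rule G_group)
  have rho_nz: "rho \<nu> x i \<noteq> 0" for x i unfolding rho_def by simp
  have rho_one: "rho \<nu> \<one>\<^bsub>G\<^esub> i = 1" for i
  proof -
    have "rho \<nu> \<one>\<^bsub>G\<^esub> i = rho \<nu> \<one>\<^bsub>G\<^esub> i * rho \<nu> \<one>\<^bsub>G\<^esub> i" using rho_hom by (metis one_closed l_one)
    then show ?thesis using rho_nz[of "\<one>\<^bsub>G\<^esub>" i] by (metis mult_cancel_left1)
  qed
  have rho_inv: "rho \<nu> (inv\<^bsub>G\<^esub> h) i * rho \<nu> h i = 1" if "h \<in> carrier G" for h i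
    using rho_hom that rho_one by (metis inv_closed l_inv)
  have sig_car: "\<sigma> x \<in> {0..<2}" if "x \<in> carrier G" for x
    using hom_in_carrier[OF sigma_hom that] by (simp add: carrier_integer_mod_group)
  have sig_mult: "\<sigma> (x \<otimes>\<^bsub>G\<^esub> y) = (\<sigma> x + \<sigma> y) mod 2" if "x \<in> carrier G" "y \<in> carrier G" for x y
    using hom_mult[OF sigma_hom that] by simp
  have MC: "\<forall>h\<in>carrier G. \<forall>d c. c \<in> A \<nu> f h \<and> hom_class q d c \<longrightarrow>
            phi \<nu> \<sigma> f (inv\<^bsub>G\<^esub> h \<otimes>\<^bsub>G\<^esub> j) (h, c)
              = (h, scale_class (cis (2 * pi * (d + shift q \<nu> h))) c)"
  proof (intro ballI allI impI)
    fix h d c assume h: "h \<in> carrier G" and cA: "c \<in> A \<nu> f h \<and> hom_class q d c"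
    define g where "g = inv\<^bsub>G\<^esub> h \<otimes>\<^bsub>G\<^esub> j"
    have g: "g \<in> carrier G" unfolding g_def using h j_mem by simp
    define I where "I = Fix \<nu> h"
    define F where "F = restr I f"
    define D where "D = rho \<nu> g"
    have D_nz: "D i \<noteq> 0" for i unfolding D_def by (rule rho_nz)
    have Dg: "D i = rho \<nu> (inv\<^bsub>G\<^esub> h) i * rho \<nu> j i" for i
      unfolding D_def g_def using rho_hom h j_mem by simp
    have D_I: "D i = cis (2 * pi * q i)" if "i \<in> I" for i
    proof -
      have "rho \<nu> h i = 1" using that unfolding I_def Fix_def rho_def by simp
      then have "rho \<nu> (inv\<^bsub>G\<^esub> h) i = 1" using rho_inv[OF h, of i] by simp
      then show ?thesis using Dg j_rho by simp
    qed
    have D_nI: "inverse (D i) = cis (2 * pi * (\<nu> h i - q i))" for i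
    proof -
      have "inverse (rho \<nu> (inv\<^bsub>G\<^esub> h) i) = rho \<nu> h i"
        using rho_inv[OF h, of i] by (metis inverse_unique)
      then have "inverse (D i) = rho \<nu> h i * inverse (cis (2 * pi * q i))"
        using Dg j_rho by (simp add: mult.commute)
      also have "\<dots> = cis (2 * pi * (\<nu> h i - q i))"
        unfolding rho_def by (simp add: inverse_eq_divide cis_divide right_diff_distrib)
      finally show ?thesis .
    qed
    have kprod: "inverse (\<Prod>i\<in>UNIV. D i) * (\<Prod>i\<in>I. D i) = cis (2 * pi * shift q \<nu> h)"
    proof -
      have split: "(\<Prod>i\<in>UNIV. D i) = (\<Prod>i\<in>UNIV - I. D i) * (\<Prod>i\<in>I. D i)"
        by (rule prod.subset_diff) auto
      have nzI: "(\<Prod>i\<in>I. D i) \<noteq> 0" using D_nz by (simp add: prod_zero_iff)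
      have "inverse (\<Prod>i\<in>UNIV. D i) * (\<Prod>i\<in>I. D i) = inverse (\<Prod>i\<in>UNIV - I. D i)"
        unfolding split using nzI by (simp add: field_simps)
      also have "\<dots> = (\<Prod>i\<in>UNIV - I. inverse (D i))"
        using prod_inversef[of D "UNIV - I"] by (simp add: o_def)
      also have "\<dots> = (\<Prod>i\<in>UNIV - I. exp (\<i> * complex_of_real (2 * pi * (\<nu> h i - q i))))"
        unfolding D_nI cis_conv_exp by simp
      also have "\<dots> = exp (\<Sum>i\<in>UNIV - I. \<i> * complex_of_real (2 * pi * (\<nu> h i - q i)))"
        by (simp add: exp_sum)
      also have "\<dots> = cis (2 * pi * shift q \<nu> h)"
        unfolding cis_conv_exp shift_def I_def
        by (simp add: sum_distrib_left of_real_sum mult.assoc)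
      finally show ?thesis .
    qed
    have sgn: "\<sigma> g * \<sigma> h = 0"
    proof -
      have s1: "\<sigma> \<one>\<^bsub>G\<^esub> = 0"
        using sig_mult[of "\<one>\<^bsub>G\<^esub>" "\<one>\<^bsub>G\<^esub>"] sig_car[of "\<one>\<^bsub>G\<^esub>"] by simp
      have s2: "(\<sigma> (inv\<^bsub>G\<^esub> h) + \<sigma> h) mod 2 = 0"
        using sig_mult[of "inv\<^bsub>G\<^esub> h" h] h s1 by simp
      have s3: "\<sigma> g = (\<sigma> (inv\<^bsub>G\<^esub> h) + \<sigma> j) mod 2" unfolding g_def using sig_mult h j_mem by simp
      have c1: "\<sigma> (inv\<^bsub>G\<^esub> h) \<in> {0..<2}" "\<sigma> h \<in> {0..<2}" "\<sigma> j \<in> {0..<2}"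
        using sig_car h j_mem by auto
      have c2: "(\<sigma> h * (\<sigma> j + 1)) mod 2 = 0" using sigma_cond h by blast
      have d1: "\<sigma> (inv\<^bsub>G\<^esub> h) = 0 \<or> \<sigma> (inv\<^bsub>G\<^esub> h) = 1" using c1(1) by auto
      have d2: "\<sigma> h = 0 \<or> \<sigma> h = 1" using c1(2) by auto
      have d3: "\<sigma> j = 0 \<or> \<sigma> j = 1" using c1(3) by auto
      show ?thesis unfolding s3 using s2 c2 d1 d2 d3 by (elim disjE) simp_all
    qed
    obtain p where p: "p \<in> polys I" "c = jclass I F p"
      using cA unfolding A_def jac_ring_def I_def F_def by blast
    obtain a0 where a0c: "a0 \<in> c" and a0h: "qhom q d a0"
      using cA unfolding hom_class_def by blast
    have a0: "a0 \<in> polys I" "(\<lambda>z. p z - a0 z) \<in> jac_ideal I F"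
      using a0c unfolding p(2) jclass_def by auto
    define a where "a = (SOME a. a \<in> c)"
    have ac: "a \<in> c" unfolding a_def using someI[of "\<lambda>a. a \<in> c" a0] a0c by simp
    have aa: "a \<in> polys I" "(\<lambda>z. p z - a z) \<in> jac_ideal I F"
      using ac unfolding p(2) jclass_def by auto
    have diff: "(\<lambda>z. a z - a0 z) \<in> jac_ideal I F"
      using jac_diff[OF a0(2) aa(2)] by simp
    have invF: "F (act D z) = F z" for z
    proof -
      have "(\<lambda>i. if i \<in> I then act D z i else 0) = act D (\<lambda>i. if i \<in> I then z i else 0)"
        unfolding act_def by auto
      then show ?thesis unfolding F_def restr_def D_def using f_inv g by simp
    qed
    have holF: "(\<lambda>u. F (z(i := u))) holomorphic_on UNIV" if "i \<in> I" for i z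
    proof -
      have eq: "(\<lambda>u. F (z(i := u))) = (\<lambda>u. f (\<lambda>k. (\<lambda>k u. if k \<in> I then (z(i := u)) k else 0) k u))"
        unfolding F_def restr_def by simp
      have "(\<lambda>u. if k \<in> I then (z(i := u)) k else 0) holomorphic_on UNIV" for k
      proof (cases "k = i")
        case True
        then have "(\<lambda>u. if k \<in> I then (z(i := u)) k else 0) = (\<lambda>u. u)" using that by simp
        then show ?thesis by (simp add: holomorphic_on_id)
      next
        case False
        then have "(\<lambda>u. if k \<in> I then (z(i := u)) k else 0) = (\<lambda>u. if k \<in> I then z k else 0)" by simp
        then show ?thesis by (simp add: holomorphic_on_const)
      qed
      then show ?thesis unfolding eq by (rule polys_holo[OF f_poly])
    qed
    have diff2: "(\<lambda>z. a (act D z) - a0 (act D z)) \<in> jac_ideal I F"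
      using jac_act[OF diff invF D_nz holF] by simp
    have a0act: "a0 (act D z) = cis (2 * pi * d) * a0 z" for z
    proof -
      have "a0 (act D z) = a0 (\<lambda>i. cis (2 * pi * q i) * z i)"
        by (rule polys_dep[OF a0(1)]) (simp add: act_def D_I)
      then show ?thesis using qhom_complex[OF a0(1) a0h] by simp
    qed
    define ks where "ks = cis (2 * pi * shift q \<nu> h)"
    define K where "K = cis (2 * pi * (d + shift q \<nu> h))"
    have K: "K = ks * cis (2 * pi * d)" unfolding K_def ks_def by (simp add: cis_mult algebra_simps)
    have Knz: "K \<noteq> 0" unfolding K_def by simp
    have phieq: "phi \<nu> \<sigma> f g (h, c) = (h, jclass I F (\<lambda>z. ks * a (act D z)))"
    proof -
      have kk: "(-1::complex) ^ nat (\<sigma> g * \<sigma> h) * inverse (\<Prod>i\<in>UNIV. D i) * (\<Prod>i\<in>I. D i) = ks"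
        using kprod unfolding ks_def sgn by (simp add: mult.assoc)
      show ?thesis
        unfolding phi_def Let_def fst_conv snd_conv I_def[symmetric] F_def[symmetric]
          D_def[symmetric] a_def[symmetric] kk by (rule refl)
    qed
    have c0: "c = jclass I F a0" unfolding p(2) by (rule jclass_cong[OF a0(2)])
    have "(\<lambda>z. ks * a (act D z) - K * a0 z) = (\<lambda>z. ks * (a (act D z) - a0 (act D z)))"
      by (simp add: a0act K right_diff_distrib mult.assoc)
    then have "(\<lambda>z. ks * a (act D z) - K * a0 z) \<in> jac_ideal I F"
      using jac_scale[OF diff2, of ks] by simp
    then have "jclass I F (\<lambda>z. ks * a (act D z)) = scale_class K c"
      unfolding c0 jclass_scale[OF Knz] by (rule jclass_cong)
    then show "phi \<nu> \<sigma> f (inv\<^bsub>G\<^esub> h \<otimes>\<^bsub>G\<^esub> j) (h, c)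
              = (h, scale_class (cis (2 * pi * (d + shift q \<nu> h))) c)"
      using phieq unfolding g_def K_def by simp
  qed
  have "G_Euler G q \<nu> \<sigma> f"
    unfolding G_Euler_def
  proof (rule bexI[OF _ j_mem], rule conjI)
    show "\<forall>g\<in>carrier G. g \<otimes>\<^bsub>G\<^esub> j = j \<otimes>\<^bsub>G\<^esub> g" using j_mem m_comm by blast
  qed (rule MC)
  then show ?thesis using MC by blast
qed

end
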